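(* Let $k$ be any field and let $f_1,\ldots,f_r$ be homogeneous polynomials (forms) in $k[x,y]$ of degrees $d_1\ge d_2\ge\cdots\ge d_r$ such that the ideal $(f_1,\ldots,f_r)$ is minimally generated by $f_1,\ldots,f_r$. Then, coefficientwise, $$\big(k[x,y]/(f_1,\ldots,f_r)\big)(z)\;\le\;\frac{1+z+\cdots+z^{d_r-1}-\big(z^{d_{r-1}}+z^{d_{r-2}}+\cdots+z^{d_1}\big)}{1-z}.$$
   Context: For a graded $k$-algebra $R=\bigoplus_{i\ge0}R_i$ with finite-dimensional graded pieces, its Hilbert series is $R(z)=\sum_{i\ge0}\dim_k R_i\,z^i$. Here $x,y$ have degree $1$. For power series $A(z)=\sum a_iz^i$, $B(z)=\sum b_iz^i$, $A\le B$ coefficientwise means $a_i\le b_i$ for all $i$. *)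

theory Defs
  imports Main "HOL-Computational_Algebra.Polynomial" "HOL-Computational_Algebra.Formal_Power_Series"
begin

text \<open>k[x,y] is represented as 'a poly poly: the coefficient of x^a y^b in p is
  coeff (coeff p a) b (outer variable x, inner variable y).\<close>

definition homogeneous :: "'a::zero poly poly \<Rightarrow> nat \<Rightarrow> bool" where
  "homogeneous p d \<longleftrightarrow> (\<forall>a b. coeff (coeff p a) b \<noteq> 0 \<longrightarrow> a + b = d)"

definition gen_ideal :: "(nat \<Rightarrow> 'a::comm_ring_1) \<Rightarrow> nat set \<Rightarrow> 'a set" where
  "gen_ideal f A = {p. \<exists>g. p = (\<Sum>i\<in>A. g i * f i)}"

definition kscale :: "'a::field \<Rightarrow> 'a poly poly \<Rightarrow> 'a poly poly" where
  "kscale c p = smult [:c:] p"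

text \<open>Dimension of the degree-i component of k[x,y]/I for a homogeneous ideal I:
  dim_k R_i - dim_k I_i, where dim_k R_i = i+1.\<close>
definition quot_hilb_fun :: "'a::field poly poly set \<Rightarrow> nat \<Rightarrow> nat" where
  "quot_hilb_fun I i = (i + 1) - vector_space.dim kscale {p \<in> I. homogeneous p i}"

definition quot_hilb_series :: "'a::field poly poly set \<Rightarrow> rat fps" where
  "quot_hilb_series I = Abs_fps (\<lambda>i. of_nat (quot_hilb_fun I i))"

end

theory Submission
  imports Defs
begin

lemma vs_kscale: "vector_space (kscale :: 'a::field \<Rightarrow> 'a poly poly \<Rightarrow> 'a poly poly)"
  unfolding vector_space_def kscale_def
  by (auto simp: smult_add_right smult_add_left[symmetric] mult.commute one_pCons[symmetric])

interpretation kv: vector_space "kscale :: 'a::field \<Rightarrow> 'a poly poly \<Rightarrow> 'a poly poly"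
  by (rule vs_kscale)

definition hc :: "nat \<Rightarrow> 'a::comm_ring_1 poly poly \<Rightarrow> 'a poly poly" where
  "hc k p = (\<Sum>a\<le>k. monom (monom (coeff (coeff p a) (k - a)) (k - a)) a)"

lemma coeff_hc: "coeff (coeff (hc k p) a) b = (if a + b = k then coeff (coeff p a) b else 0)"
  unfolding hc_def by (auto simp: coeff_sum coeff_monom)

lemma coeff2_eq: "(\<And>a b. coeff (coeff p a) b = coeff (coeff q a) b) \<Longrightarrow> p = q"
  by (simp add: poly_eq_iff)

lemma hom_hc: "homogeneous p k \<longleftrightarrow> hc k p = p"
  unfolding homogeneous_def by (auto simp: poly_eq_iff coeff_hc split: if_splits)

lemma hc_add: "hc k (p + q) = hc k p + hc k q"
  by (rule coeff2_eq) (simp add: coeff_hc)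

lemma hc_zero[simp]: "hc k 0 = 0"
  by (rule coeff2_eq) (simp add: coeff_hc)

lemma hc_sum: "hc k (\<Sum>i\<in>A. g i) = (\<Sum>i\<in>A. hc k (g i))"
  by (induction A rule: infinite_finite_induct) (auto simp: hc_add)

lemma coeff2_mult: "coeff (coeff (g * f) a) b =
   (\<Sum>i\<le>a. \<Sum>j\<le>b. coeff (coeff g i) j * coeff (coeff f (a-i)) (b-j))"
  by (simp add: coeff_mult coeff_sum)

lemma hc_mult:
  assumes hf: "homogeneous f d"
  shows "hc k (g * f) = (if d \<le> k then hc (k - d) g * f else 0)"
proof (rule coeff2_eq)
  fix a b
  have fz: "\<And>i j. i \<le> a \<Longrightarrow> j \<le> b \<Longrightarrow> coeff (coeff f (a-i)) (b-j) \<noteq> 0 \<Longrightarrow> i + j + d = a + b"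
  proof -
    fix i j assume h: "i \<le> a" "j \<le> b" "coeff (coeff f (a-i)) (b-j) \<noteq> 0"
    then have "(a - i) + (b - j) = d" using hf unfolding homogeneous_def by blast
    then show "i + j + d = a + b" using h by linarith
  qed
  show "coeff (coeff (hc k (g * f)) a) b = coeff (coeff (if d \<le> k then hc (k - d) g * f else 0) a) b"
  proof (cases "d \<le> k")
    case True
    show ?thesis
    proof (cases "a + b = k")
      case True
      have "coeff (coeff (hc k (g * f)) a) b = (\<Sum>i\<le>a. \<Sum>j\<le>b. coeff (coeff g i) j * coeff (coeff f (a-i)) (b-j))"
        using True by (simp add: coeff_hc coeff2_mult)
      also have "\<dots> = (\<Sum>i\<le>a. \<Sum>j\<le>b. coeff (coeff (hc (k-d) g) i) j * coeff (coeff f (a-i)) (b-j))"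
      proof (intro sum.cong refl)
        fix i j assume ij: "i \<in> {..a}" "j \<in> {..b}"
        show "coeff (coeff g i) j * coeff (coeff f (a-i)) (b-j) = coeff (coeff (hc (k-d) g) i) j * coeff (coeff f (a-i)) (b-j)"
        proof (cases "coeff (coeff f (a-i)) (b-j) = 0")
          case False
          then have "i + j + d = a + b" using fz ij by auto
          then show ?thesis using True by (simp add: coeff_hc)
        qed simp
      qed
      also have "\<dots> = coeff (coeff (hc (k - d) g * f) a) b" by (simp add: coeff2_mult)
      finally show ?thesis using \<open>d \<le> k\<close> by simp
    next
      case False
      have "(\<Sum>i\<le>a. \<Sum>j\<le>b. coeff (coeff (hc (k-d) g) i) j * coeff (coeff f (a-i)) (b-j)) = 0"
        by (intro sum.neutral ballI) (use fz False \<open>d \<le> k\<close> in \<open>fastforce simp: coeff_hc\<close>)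
      then show ?thesis using False \<open>d \<le> k\<close> by (simp add: coeff_hc coeff2_mult)
    qed
  next
    case False
    have "(\<Sum>i\<le>a. \<Sum>j\<le>b. coeff (coeff g i) j * coeff (coeff f (a-i)) (b-j)) = 0" if "a + b = k"
      by (intro sum.neutral ballI) (use fz False that in \<open>fastforce\<close>)
    then show ?thesis using False by (simp add: coeff_hc coeff2_mult)
  qed
qed

lemma gen_ideal_mono:
  assumes "finite A" "B \<subseteq> A" shows "gen_ideal f B \<subseteq> gen_ideal f A"
proof
  fix p assume "p \<in> gen_ideal f B"
  then obtain g where g: "p = (\<Sum>i\<in>B. g i * f i)" unfolding gen_ideal_def by blast
  have "p = (\<Sum>i\<in>A. (if i \<in> B then g i else 0) * f i)"
    using g sum.inter_restrict[OF assms(1), of "\<lambda>i. g i * f i" B] assms(2)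
    by (simp add: Int_absorb1 cong: if_cong) (intro sum.cong, auto)
  then show "p \<in> gen_ideal f A" unfolding gen_ideal_def mem_Collect_eq by (rule exI[of _ "\<lambda>i. if i \<in> B then g i else 0"])
qed

lemma gen_ideal_add: "p \<in> gen_ideal f A \<Longrightarrow> q \<in> gen_ideal f A \<Longrightarrow> p + q \<in> gen_ideal f A"
proof -
  assume "p \<in> gen_ideal f A" "q \<in> gen_ideal f A"
  then obtain g h where "p = (\<Sum>i\<in>A. g i * f i)" "q = (\<Sum>i\<in>A. h i * f i)" unfolding gen_ideal_def by blast
  then have "p + q = (\<Sum>i\<in>A. (g i + h i) * f i)" by (simp add: sum.distrib distrib_right)
  then show ?thesis unfolding gen_ideal_def mem_Collect_eq by (rule exI[of _ "\<lambda>i. g i + h i"])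
qed

lemma gen_ideal_mult: "p \<in> gen_ideal f A \<Longrightarrow> q * p \<in> gen_ideal f A"
proof -
  assume "p \<in> gen_ideal f A"
  then obtain g where "p = (\<Sum>i\<in>A. g i * f i)" unfolding gen_ideal_def by blast
  then have "q * p = (\<Sum>i\<in>A. (q * g i) * f i)" by (simp add: sum_distrib_left mult.assoc)
  then show ?thesis unfolding gen_ideal_def mem_Collect_eq by (rule exI[of _ "\<lambda>i. q * g i"])
qed

lemma gen_ideal_zero: "0 \<in> gen_ideal f A"
  unfolding gen_ideal_def by (auto intro!: exI[of _ "\<lambda>i. 0"])

lemma gen_ideal_gen: "finite A \<Longrightarrow> j \<in> A \<Longrightarrow> f j \<in> gen_ideal f A"
proof -
  assume "finite A" "j \<in> A"
  then have "f j = (\<Sum>i\<in>A. (if i = j then 1 else 0) * f i)"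
    by (simp add: if_distrib[of "\<lambda>x. x * _"] cong: if_cong)
  then show ?thesis unfolding gen_ideal_def mem_Collect_eq by (rule exI[of _ "\<lambda>i. if i = j then 1 else 0"])
qed

lemma smult_as_mult: "smult c p = [:c:] * p" by simp

lemma gen_ideal_subspace: "kv.subspace (gen_ideal f A)"
  unfolding kv.subspace_def kscale_def smult_as_mult
  by (auto simp del: mult_pCons_left simp add: gen_ideal_add gen_ideal_mult gen_ideal_zero)

lemma span_gen_ideal: "S \<subseteq> gen_ideal f A \<Longrightarrow> kv.span S \<subseteq> gen_ideal f A"
  by (rule kv.span_minimal[OF _ gen_ideal_subspace])

lemma hom_in_ideal:
  assumes A: "finite A" and hf: "\<And>i. i \<in> A \<Longrightarrow> homogeneous (f i) (d i)"
    and p: "p \<in> gen_ideal f A" and hp: "homogeneous p k"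
  shows "p \<in> gen_ideal f {i\<in>A. d i \<le> k}"
proof -
  obtain g where g: "p = (\<Sum>i\<in>A. g i * f i)" using p unfolding gen_ideal_def by blast
  have "p = hc k p" using hp by (simp add: hom_hc)
  also have "\<dots> = (\<Sum>i\<in>A. hc k (g i * f i))" by (simp add: g hc_sum)
  also have "\<dots> = (\<Sum>i\<in>A. if d i \<le> k then hc (k - d i) (g i) * f i else 0)"
    by (intro sum.cong refl) (simp add: hc_mult hf)
  also have "\<dots> = (\<Sum>i\<in>{i\<in>A. d i \<le> k}. hc (k - d i) (g i) * f i)"
    by (simp add: sum.inter_filter A)
  finally show ?thesis unfolding gen_ideal_def mem_Collect_eq by (rule exI[of _ "\<lambda>i. hc (k - d i) (g i)"])
qed

interpretation kp: vector_space_pair "kscale :: 'a::field \<Rightarrow> 'a poly poly \<Rightarrow> 'a poly poly" "kscale :: 'a::field \<Rightarrow> 'a poly poly \<Rightarrow> 'a poly poly"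
  by unfold_locales

lemma linear_X: "Vector_Spaces.linear kscale kscale (pCons (0::'a::field poly))"
  unfolding Vector_Spaces.linear_iff using vs_kscale by (auto simp: kscale_def)

lemma indep_X: "kv.independent B \<Longrightarrow> kv.independent (pCons (0::'a::field poly) ` B)"
  by (rule kp.linear_independent_injective_image[OF linear_X]) (auto simp: inj_on_def)

lemma hom_X: "homogeneous p n \<Longrightarrow> homogeneous (pCons 0 p) (Suc n)"
  unfolding homogeneous_def
  apply (clarsimp simp: coeff_pCons' split: if_splits)
  subgoal for a b by (drule spec[of _ "a - 1"], drule spec[of _ b]) auto
  done

lemma hom_Y: "homogeneous p n \<Longrightarrow> homogeneous (smult [:0,1:] p) (Suc n)"
  unfolding homogeneous_def
  apply (clarsimp simp: coeff_pCons' split: if_splits)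
  subgoal for a b by (drule spec[of _ a], drule spec[of _ "b - 1"]) auto
  done

lemma ideal_X: "p \<in> gen_ideal f A \<Longrightarrow> pCons 0 p \<in> gen_ideal f A"
  using gen_ideal_mult[of p f A "[:0,1:]"] by simp

lemma ideal_Y: "p \<in> gen_ideal f A \<Longrightarrow> smult c p \<in> gen_ideal f A"
  using gen_ideal_mult[of p f A "[:c:]"] by simp

lemma step_xy:
  fixes B :: "'a::field poly poly set"
  assumes "finite B" "kv.independent B" "B \<noteq> {}"
  shows "\<exists>v\<in>B. smult [:0,1:] v \<notin> kv.span (pCons 0 ` B)"
proof -
  have "0 \<notin> B" using assms(2) kv.dependent_zero by blast
  obtain b where b: "b \<in> B" using assms(3) by blast
  then have "b \<noteq> 0" using \<open>0 \<notin> B\<close> by auto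
  then have ex: "\<exists>a. \<exists>b\<in>B. coeff b a \<noteq> 0" using b leading_coeff_neq_0 by blast
  define a0 where "a0 = (LEAST a. \<exists>b\<in>B. coeff b a \<noteq> 0)"
  obtain v where v: "v \<in> B" "coeff v a0 \<noteq> 0" using LeastI_ex[OF ex] unfolding a0_def by blast
  have low: "coeff b' a = 0" if "b' \<in> B" "a < a0" for b' a
    using not_less_Least[of a "\<lambda>a. \<exists>b\<in>B. coeff b a \<noteq> 0"] that unfolding a0_def by blast
  have sub: "kv.subspace {q. coeff q a0 = 0}"
    unfolding kv.subspace_def kscale_def by auto
  have "pCons 0 ` B \<subseteq> {q. coeff q a0 = 0}"
    using low by (auto simp: coeff_pCons')
  then have "kv.span (pCons 0 ` B) \<subseteq> {q. coeff q a0 = 0}"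
    by (rule kv.span_minimal[OF _ sub])
  moreover have "coeff (smult [:0,1:] v) a0 \<noteq> 0" using v by simp
  ultimately show ?thesis using v by blast
qed

lemma sum_ind_card: "finite A \<Longrightarrow> (\<Sum>x\<in>A. if P x then 1 else 0) = (of_nat (card {x\<in>A. P x}) :: 'b::semiring_1)"
  by (simp add: sum.inter_filter[symmetric])

lemma rhs_coeff:
  fixes D :: nat and e :: "nat \<Rightarrow> nat" and R :: nat
  shows "fps_nth (((\<Sum>m<D. fps_X ^ m) - (\<Sum>j<R. fps_X ^ e j)) / (1 - fps_X)) n
     = (of_nat (card {m. m < D \<and> m \<le> n}) - of_nat (card {j. j < R \<and> e j \<le> n}) :: rat)"
proof -
  let ?A = "(\<Sum>m<D. fps_X ^ m) - (\<Sum>j<R. fps_X ^ e j) :: rat fps"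
  have inv: "inverse (1 - fps_X :: rat fps) = Abs_fps (\<lambda>_. 1)"
    by (metis fps_inverse_gp' fps_inverse_idempotent fps_one_nth one_neq_zero fps_nth_Abs_fps)
  have "?A / (1 - fps_X) = ?A * Abs_fps (\<lambda>_. 1)"
    by (simp add: fps_divide_unit inv)
  then have "fps_nth (?A / (1 - fps_X)) n = (\<Sum>i=0..n. fps_nth ?A i)"
    by (simp add: fps_mult_nth)
  also have "\<dots> = (\<Sum>i=0..n. \<Sum>m<D. if i = m then 1 else 0) - (\<Sum>i=0..n. \<Sum>j<R. if i = e j then 1 else 0)"
    by (simp add: fps_sum_nth sum_subtractf)
  also have "\<dots> = (\<Sum>m<D. \<Sum>i=0..n. if i = m then 1 else 0) - (\<Sum>j<R. \<Sum>i=0..n. if i = e j then 1 else 0)"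
    by (rule arg_cong2[where f="(-)"]; rule sum.swap)
  also have "\<dots> = (\<Sum>m<D. if m \<le> n then 1 else 0) - (\<Sum>j<R. if e j \<le> n then 1 else 0)"
    by (simp add: sum.delta')
  also have "\<dots> = of_nat (card {m. m < D \<and> m \<le> n}) - of_nat (card {j. j < R \<and> e j \<le> n})"
    by (simp add: sum_ind_card lessThan_def conj_commute)
  finally show ?thesis .
qed

lemma span_hom:
  assumes "homogeneous (p :: 'a::field poly poly) n"
  shows "p \<in> kv.span ((\<lambda>a. monom (monom 1 (n - a)) a) ` {..n})"
proof -
  have "p = hc n p" using assms by (simp add: hom_hc)
  also have "\<dots> = (\<Sum>a\<le>n. kscale (coeff (coeff p a) (n - a)) (monom (monom 1 (n - a)) a))"
    unfolding hc_def kscale_def by (intro sum.cong refl) (simp add: smult_monom)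
  finally have eq: "p = \<dots>" .
  show ?thesis
    by (subst eq, intro kv.span_sum kv.span_scale kv.span_base) auto
qed

lemma dim_le:
  "vector_space.dim kscale {p \<in> (I :: 'a::field poly poly set). homogeneous p n} \<le> n + 1"
proof -
  have "vector_space.dim kscale {p \<in> I. homogeneous p n} \<le> card ((\<lambda>a. monom (monom (1::'a) (n - a)) a) ` {..n})"
    by (rule kv.dim_le_card) (use span_hom in auto)
  also have "\<dots> \<le> n + 1" using card_image_le[of "{..n}"] by simp
  finally show ?thesis .
qed



context
  fixes f :: "nat \<Rightarrow> 'a::field poly poly" and d :: "nat \<Rightarrow> nat" and r :: nat
  assumes r_pos: "r \<ge> 1"
    and forms: "\<And>i. i < r \<Longrightarrow> homogeneous (f i) (d i)"
    and deg_order: "\<And>i j. i \<le> j \<Longrightarrow> j < r \<Longrightarrow> d j \<le> d i"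
    and minimal: "\<And>j. j < r \<Longrightarrow> f j \<notin> gen_ideal f ({..<r} - {j})"
begin

lemma add_gens:
  assumes S: "finite S" "kv.independent S" "S \<subseteq> {p \<in> gen_ideal f {..<r}. homogeneous p m}"
    and Sj: "\<And>j. j < r \<Longrightarrow> d j = m \<Longrightarrow> S \<subseteq> gen_ideal f ({..<r} - {j})"
  shows "finite (S \<union> f ` {j. j < r \<and> d j = m}) \<and> kv.independent (S \<union> f ` {j. j < r \<and> d j = m})
    \<and> S \<union> f ` {j. j < r \<and> d j = m} \<subseteq> {p \<in> gen_ideal f {..<r}. homogeneous p m}
    \<and> card (S \<union> f ` {j. j < r \<and> d j = m}) = card S + card {j. j < r \<and> d j = m}"
proof -
  let ?G = "{j. j < r \<and> d j = m}"
  have fin: "finite ?G" by simp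
  have main: "kv.independent (S \<union> f ` H) \<and> card (S \<union> f ` H) = card S + card H" if "H \<subseteq> ?G" for H
    using finite_subset[OF that fin] that
  proof (induction H rule: finite_induct)
    case empty then show ?case using S by simp
  next
    case (insert a H)
    have a: "a < r" "d a = m" using insert.prems by auto
    have "S \<union> f ` H \<subseteq> gen_ideal f ({..<r} - {a})"
    proof (intro Un_least Sj[OF a] image_subsetI)
      fix h assume "h \<in> H"
      then have "h \<in> {..<r} - {a}" using insert.hyps(2) insert.prems by auto
      then show "f h \<in> gen_ideal f ({..<r} - {a})" by (intro gen_ideal_gen) auto
    qed
    then have sp: "kv.span (S \<union> f ` H) \<subseteq> gen_ideal f ({..<r} - {a})" by (rule span_gen_ideal)
    have nin: "f a \<notin> kv.span (S \<union> f ` H)" using sp minimal[OF a(1)] by blast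
    then have nin2: "f a \<notin> S \<union> f ` H" using kv.span_base[of "f a" "S \<union> f ` H"] by auto
    have IH: "kv.independent (S \<union> f ` H) \<and> card (S \<union> f ` H) = card S + card H"
      using insert.IH insert.prems by auto
    have "S \<union> f ` insert a H = insert (f a) (S \<union> f ` H)" by auto
    moreover have "card (insert (f a) (S \<union> f ` H)) = Suc (card (S \<union> f ` H))"
      using nin2 S(1) insert.hyps(1) by (simp add: card_insert_disjoint)
    moreover have "kv.independent (insert (f a) (S \<union> f ` H))"
      by (rule kv.independent_insertI[OF nin IH[THEN conjunct1]])
    moreover have "card (insert a H) = Suc (card H)" using insert.hyps(1,2) by simp
    ultimately show ?case using IH by simp
  qed
  have sub: "f ` ?G \<subseteq> {p \<in> gen_ideal f {..<r}. homogeneous p m}"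
  proof (intro image_subsetI CollectI conjI)
    fix j assume "j \<in> ?G"
    then show "f j \<in> gen_ideal f {..<r}" "homogeneous (f j) m" using forms by (auto intro: gen_ideal_gen)
  qed
  have "kv.independent (S \<union> f ` ?G) \<and> card (S \<union> f ` ?G) = card S + card ?G"
    using main[OF order_refl] .
  moreover have "S \<union> f ` ?G \<subseteq> {p \<in> gen_ideal f {..<r}. homogeneous p m}"
    using S(3) sub by (rule Un_least)
  moreover have "finite (S \<union> f ` ?G)" using S(1) fin by simp
  ultimately show ?thesis by (intro conjI) simp_all
qed

lemma inj_f: "inj_on f {..<r}"
proof (rule inj_onI, rule ccontr)
  fix i j assume ij: "i \<in> {..<r}" "j \<in> {..<r}" "f i = f j" "i \<noteq> j"
  then have "f j \<in> gen_ideal f ({..<r} - {i})" by (intro gen_ideal_gen) auto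
  then show False using minimal[of i] ij by auto
qed

lemma card_split: "card {j. j < r \<and> d j \<le> Suc n} = card {j. j < r \<and> d j \<le> n} + card {j. j < r \<and> d j = Suc n}"
proof -
  have "{j. j < r \<and> d j \<le> Suc n} = {j. j < r \<and> d j \<le> n} \<union> {j. j < r \<and> d j = Suc n}" by auto
  then show ?thesis by (simp add: card_Un_disjoint disjoint_iff)
qed

lemma main_ind:
  assumes "d (r - 1) \<le> n"
  shows "\<exists>B. finite B \<and> kv.independent B \<and> B \<subseteq> {p \<in> gen_ideal f {..<r}. homogeneous p n} \<and> B \<noteq> {}
     \<and> n - d (r - 1) + card {j. j < r \<and> d j \<le> n} \<le> card B"
  using assms
proof (induction n rule: dec_induct)
  case base
  let ?D = "d (r - 1)"
  let ?G = "{j. j < r \<and> d j = ?D}"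
  have A: "finite ({} \<union> f ` ?G) \<and> kv.independent ({} \<union> f ` ?G)
    \<and> {} \<union> f ` ?G \<subseteq> {p \<in> gen_ideal f {..<r}. homogeneous p ?D}
    \<and> card ({} \<union> f ` ?G) = card ({} :: 'a poly poly set) + card ?G"
    by (rule add_gens[of "{}" ?D]) (auto simp: kv.independent_empty)
  have "{j. j < r \<and> d j \<le> ?D} = ?G" 
  proof (intro set_eqI iffI)
    fix j assume "j \<in> {j. j < r \<and> d j \<le> ?D}"
    moreover have "?D \<le> d j" if "j < r" using deg_order[of j "r - 1"] r_pos that by simp
    ultimately show "j \<in> ?G" by (simp add: antisym)
  qed auto
  moreover have "r - 1 \<in> ?G" using r_pos by auto
  ultimately show ?case using A by (intro exI[of _ "f ` ?G"]) auto
next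
  case (step n)
  let ?D = "d (r - 1)"
  obtain B where B: "finite B" "kv.independent B" "B \<subseteq> {p \<in> gen_ideal f {..<r}. homogeneous p n}" "B \<noteq> {}"
    "n - ?D + card {j. j < r \<and> d j \<le> n} \<le> card B" using step.IH by blast
  obtain v where v: "v \<in> B" "smult [:0,1:] v \<notin> kv.span (pCons 0 ` B)" using step_xy[OF B(1,2,4)] by blast
  define S where "S = insert (smult [:0,1:] v) (pCons 0 ` B)"
  have Sfin: "finite S" using B(1) unfolding S_def by simp
  have Sind: "kv.independent S" unfolding S_def
    by (rule kv.independent_insertI[OF v(2) indep_X[OF B(2)]])
  have nin: "smult [:0,1:] v \<notin> pCons 0 ` B" using v(2) kv.span_base[of _ "pCons 0 ` B"] by auto
  have Scard: "card S = card B + 1" unfolding S_def using nin B(1)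
    by (simp add: card_image inj_on_def)
  have Ssub: "S \<subseteq> {p \<in> gen_ideal f {..<r}. homogeneous p (Suc n)}"
    unfolding S_def using B(3) v(1) by (auto intro: hom_X hom_Y ideal_X ideal_Y)
  have Sj: "S \<subseteq> gen_ideal f ({..<r} - {j})" if j: "j < r" "d j = Suc n" for j
  proof -
    have "b \<in> gen_ideal f ({..<r} - {j})" if b: "b \<in> B" for b
    proof -
      have "b \<in> gen_ideal f {i \<in> {..<r}. d i \<le> n}"
        by (rule hom_in_ideal) (use b B(3) forms in auto)
      moreover have "gen_ideal f {i \<in> {..<r}. d i \<le> n} \<subseteq> gen_ideal f ({..<r} - {j})"
        by (rule gen_ideal_mono) (use j in auto)
      ultimately show ?thesis by blast
    qed
    then show ?thesis unfolding S_def using v(1) by (auto intro: ideal_X ideal_Y)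
  qed
  have T: "finite (S \<union> f ` {j. j < r \<and> d j = Suc n}) \<and> kv.independent (S \<union> f ` {j. j < r \<and> d j = Suc n})
    \<and> S \<union> f ` {j. j < r \<and> d j = Suc n} \<subseteq> {p \<in> gen_ideal f {..<r}. homogeneous p (Suc n)}
    \<and> card (S \<union> f ` {j. j < r \<and> d j = Suc n}) = card S + card {j. j < r \<and> d j = Suc n}"
    by (rule add_gens[OF Sfin Sind Ssub Sj])
  have "Suc n - ?D + card {j. j < r \<and> d j \<le> Suc n} \<le> card (S \<union> f ` {j. j < r \<and> d j = Suc n})"
    using T Scard B(5) card_split[of n] step.hyps by simp
  moreover have "S \<union> f ` {j. j < r \<and> d j = Suc n} \<noteq> {}" unfolding S_def by simp
  ultimately show ?case using T by blast
qed

end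

lemma indep_le_dim:
  fixes C :: "'a::field poly poly set"
  assumes "C \<subseteq> {p \<in> I. homogeneous p n}" "kv.independent C"
  shows "card C \<le> vector_space.dim kscale {p \<in> I. homogeneous p n}"
proof -
  let ?M = "(\<lambda>a. monom (monom (1::'a) (n - a)) a) ` {..n}"
  obtain B where B: "B \<subseteq> {p \<in> I. homogeneous p n}" "kv.independent B"
    "{p \<in> I. homogeneous p n} \<subseteq> kv.span B" "card B = vector_space.dim kscale {p \<in> I. homogeneous p n}"
    by (rule kv.basis_exists)
  have "B \<subseteq> kv.span ?M" using B(1) span_hom by auto
  then have "finite B" using kv.independent_span_bound[of ?M B] B(2) by auto
  moreover have "C \<subseteq> kv.span B" using assms(1) B(3) by auto
  ultimately have "card C \<le> card B" using kv.independent_span_bound[of B C] assms(2) by auto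
  then show ?thesis using B(4) by simp
qed

theorem mainTheorem1:
  fixes f :: "nat \<Rightarrow> 'a::field poly poly" and d :: "nat \<Rightarrow> nat" and r :: nat
  assumes r_pos: "r \<ge> 1"
    and forms: "\<And>i. i < r \<Longrightarrow> homogeneous (f i) (d i)"
    and deg_order: "\<And>i j. i \<le> j \<Longrightarrow> j < r \<Longrightarrow> d j \<le> d i"
    and minimal: "\<And>j. j < r \<Longrightarrow> f j \<notin> gen_ideal f ({..<r} - {j})"
  shows "\<forall>n. fps_nth (quot_hilb_series (gen_ideal f {..<r})) n
           \<le> fps_nth (((\<Sum>m<d (r - 1). fps_X ^ m) - (\<Sum>j<r - 1. fps_X ^ d j))
                      / (1 - fps_X)) n"
proof
  fix n
  let ?D = "d (r - 1)"
  let ?dm = "vector_space.dim kscale {p \<in> gen_ideal f {..<r}. homogeneous p n}"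
  let ?c = "card {j. j < r - 1 \<and> d j \<le> n}"
  have dle: "?dm \<le> n + 1" by (rule dim_le)
  have L: "fps_nth (quot_hilb_series (gen_ideal f {..<r})) n = of_nat (n + 1) - of_nat ?dm"
    using dle by (simp add: quot_hilb_series_def quot_hilb_fun_def of_nat_diff)
  have R: "fps_nth (((\<Sum>m<?D. fps_X ^ m) - (\<Sum>j<r - 1. fps_X ^ d j)) / (1 - fps_X)) n
     = (of_nat (card {m. m < ?D \<and> m \<le> n}) - of_nat ?c :: rat)"
    by (rule rhs_coeff)
  have Dle: "?D \<le> d j" if "j < r" for j using deg_order[of j "r - 1"] r_pos that by simp
  show "fps_nth (quot_hilb_series (gen_ideal f {..<r})) n
           \<le> fps_nth (((\<Sum>m<?D. fps_X ^ m) - (\<Sum>j<r - 1. fps_X ^ d j)) / (1 - fps_X)) n"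
  proof (cases "n < ?D")
    case True
    have e1: "{j. j < r - 1 \<and> d j \<le> n} = {}"
    proof (rule ccontr)
      assume "{j. j < r - 1 \<and> d j \<le> n} \<noteq> {}"
      then obtain j where "j < r - 1" "d j \<le> n" by blast
      then show False using Dle[of j] True by linarith
    qed
    have e2: "{m. m < ?D \<and> m \<le> n} = {..n}" using True by auto
    show ?thesis unfolding L R e1 e2 by simp
  next
    case False
    then have Dn: "?D \<le> n" by simp
    obtain B where B: "finite B" "kv.independent B" "B \<subseteq> {p \<in> gen_ideal f {..<r}. homogeneous p n}"
      "n - ?D + card {j. j < r \<and> d j \<le> n} \<le> card B"
      using main_ind[OF r_pos forms deg_order minimal Dn] by blast
    have "card B \<le> ?dm" by (rule indep_le_dim[OF B(3) B(2)])
    moreover have "{j. j < r \<and> d j \<le> n} = insert (r - 1) {j. j < r - 1 \<and> d j \<le> n}"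
      using Dn r_pos by auto
    then have "card {j. j < r \<and> d j \<le> n} = ?c + 1" by simp
    moreover have "{m. m < ?D \<and> m \<le> n} = {..<?D}" using Dn by auto
    ultimately have "n - ?D + ?c + 1 \<le> ?dm" "card {m. m < ?D \<and> m \<le> n} = ?D" using B(4) by auto
    then show ?thesis unfolding L R using Dn dle
      by (simp add: of_nat_diff)
  qed
qed

end
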